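(* Let $c\in(0,1)$ be a constant with the following property: for every Poisson Binomial distribution $q$ on $\mathbb Z_{\geq 0}$ with mode $k^*$, one has $q(k^* )\geq \frac{c}{\sqrt{k^*+1}}$. Let $p:\mathbb Z_{\geq 0}\to\mathbb R_{\geq 0}$ be a Poisson Binomial distribution and let $k\geq 1$ be an integer with $$p(k)<\frac{c}{12\sqrt{3(k+1)}}.$$ Set $P_{<k}=\sum_{i<k}p(i)$ and $P_{>k}=\sum_{i>k}p(i)$. Then: (1) if the mode of $p$ is less than $k$, then $P_{>k}\leq \frac12-\frac{c}{12}$; (2) if the mode of $p$ is greater than $k$, then $P_{<k}\leq \frac12-\frac{c}{12}$.
   Context: A Poisson Binomial distribution is the distribution on $\mathbb Z_{\geq 0}$ of $\sum_{i=1}^N b_i$ where $N$ is a nonnegative integer and $b_1,\dots,b_N$ are independent Bernoulli random variables with arbitrary success probabilities $\pi_i\in[0,1]$. The mode of a distribution $p$ on $\mathbb Z_{\geq 0}$ is the smallest integer maximizing $p$ (ties are broken by taking the smaller value). *)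

theory Defs
  imports "HOL-Probability.Probability"
begin

fun poibin :: "real list \<Rightarrow> nat pmf" where
  "poibin [] = return_pmf 0"
| "poibin (q # qs) =
     bind_pmf (bernoulli_pmf q) (\<lambda>b. bind_pmf (poibin qs) (\<lambda>s. return_pmf (of_bool b + s)))"

definition is_poibin :: "nat pmf \<Rightarrow> bool" where
  "is_poibin p \<longleftrightarrow> (\<exists>qs. set qs \<subseteq> {0..1} \<and> p = poibin qs)"

definition pmf_mode :: "nat pmf \<Rightarrow> nat" where
  "pmf_mode p = (LEAST k. \<forall>j. pmf p j \<le> pmf p k)"

end

theory Submission
  imports Defs
begin

lemma pmf_poibin_Cons:
  assumes "0 \<le> q" "q \<le> 1"
  shows "pmf (poibin (q # qs)) n =
     (1 - q) * pmf (poibin qs) n + q * (if n = 0 then 0 else pmf (poibin qs) (n - 1))"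
proof -
  have e: "\<And>b s. return_pmf (of_bool b + s) = (return_pmf (of_bool b + s) :: nat pmf)" by simp
  have A: "pmf (bind_pmf (poibin qs) (\<lambda>s. return_pmf (of_bool b + s))) n =
      (if b then (if n = 0 then 0 else pmf (poibin qs) (n - 1)) else pmf (poibin qs) n)" for b
  proof -
    have "bind_pmf (poibin qs) (\<lambda>s. return_pmf (of_bool b + s)) = map_pmf (\<lambda>s. of_bool b + s) (poibin qs)"
      by (simp add: map_pmf_def)
    moreover have "(\<lambda>s. of_bool b + s) -` {n} = (if b then (if n = 0 then {} else {n - 1}) else {n})"
      by auto
    ultimately show ?thesis by (simp add: pmf_map measure_pmf_single)
  qed
  have "pmf (poibin (q # qs)) n = (\<integral>b. pmf (bind_pmf (poibin qs) (\<lambda>s. return_pmf (of_bool b + s))) n \<partial>bernoulli_pmf q)"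
    by (simp only: poibin.simps pmf_bind)
  also have "\<dots> = (\<integral>b. (if b then (if n = 0 then 0 else pmf (poibin qs) (n - 1)) else pmf (poibin qs) n) \<partial>bernoulli_pmf q)"
    by (simp only: A)
  also have "\<dots> = (1 - q) * pmf (poibin qs) n + q * (if n = 0 then 0 else pmf (poibin qs) (n - 1))"
    using assms by simp
  finally show ?thesis .
qed

lemma set_poibin: "set_pmf (poibin qs) \<subseteq> {..length qs}"
  by (induction qs) (auto simp: set_bind_pmf)

definition LC :: "(int \<Rightarrow> real) \<Rightarrow> bool" where
  "LC f \<longleftrightarrow> (\<forall>a b s. 0 \<le> s \<longrightarrow> a \<le> b \<longrightarrow> f a * f (b + s) \<le> f (a + s) * f b)"

lemma LC_step:
  assumes f: "LC f" and al: "0 \<le> \<alpha>" and be: "0 \<le> \<beta>"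
  shows "LC (\<lambda>i. \<alpha> * f i + \<beta> * f (i - 1))"
  unfolding LC_def
proof (intro allI impI)
  fix a b s :: int assume s: "0 \<le> s" and ab: "a \<le> b"
  show "(\<alpha> * f a + \<beta> * f (a - 1)) * (\<alpha> * f (b + s) + \<beta> * f (b + s - 1))
        \<le> (\<alpha> * f (a + s) + \<beta> * f (a + s - 1)) * (\<alpha> * f b + \<beta> * f (b - 1))"
  proof (cases "s = 0")
    case True then show ?thesis by simp
  next
    case False
    have L: "\<And>a b s. 0 \<le> s \<Longrightarrow> a \<le> b \<Longrightarrow> f a * f (b + s) \<le> f (a + s) * f b"
      using f unfolding LC_def by blast
    have h1: "f a * f (b + s) \<le> f (a + s) * f b" using f s ab unfolding LC_def by blast
    have h2: "f (a - 1) * f (b - 1 + s) \<le> f (a - 1 + s) * f (b - 1)" using f s ab unfolding LC_def by simp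
    have h3: "f a * f (b + (s - 1)) \<le> f (a + (s - 1)) * f b" using f s ab False unfolding LC_def by simp
    have h4: "f (a - 1) * f (b - 1 + (s + 1)) \<le> f (a - 1 + (s + 1)) * f (b - 1)" using L[of "s+1" "a-1" "b-1"] s ab by simp
    have e1: "b - 1 + s = b + s - 1" "a - 1 + s = a + s - 1" "b + (s - 1) = b + s - 1" "a + (s - 1) = a + s - 1"
      "b - 1 + (s + 1) = b + s" "a - 1 + (s + 1) = a + s" by simp_all
    have m1: "\<alpha> * \<alpha> * (f a * f (b + s)) \<le> \<alpha> * \<alpha> * (f (a + s) * f b)"
      using h1 al by (simp add: mult_left_mono)
    have m2: "\<beta> * \<beta> * (f (a - 1) * f (b + s - 1)) \<le> \<beta> * \<beta> * (f (a + s - 1) * f (b - 1))"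
      using h2 be e1 by (simp add: mult_left_mono)
    have m3: "\<alpha> * \<beta> * (f a * f (b + s - 1)) \<le> \<alpha> * \<beta> * (f (a + s - 1) * f b)"
      using h3 al be e1 by (simp add: mult_left_mono)
    have m4: "\<alpha> * \<beta> * (f (a - 1) * f (b + s)) \<le> \<alpha> * \<beta> * (f (a + s) * f (b - 1))"
      using h4 al be e1 by (simp add: mult_left_mono)
    show ?thesis using m1 m2 m3 m4 by (simp add: algebra_simps)
  qed
qed

definition ext :: "nat pmf \<Rightarrow> int \<Rightarrow> real" where
  "ext p i = (if i < 0 then 0 else pmf p (nat i))"

lemma LC_poibin: "set qs \<subseteq> {0..1} \<Longrightarrow> LC (ext (poibin qs))"
proof (induction qs)
  case Nil
  show ?case unfolding LC_def ext_def by (auto simp: indicator_def)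
next
  case (Cons q qs)
  then have q: "0 \<le> q" "q \<le> 1" and IH: "LC (ext (poibin qs))" by auto
  have "ext (poibin (q # qs)) = (\<lambda>i. (1 - q) * ext (poibin qs) i + q * ext (poibin qs) (i - 1))"
  proof
    fix i :: int
    show "ext (poibin (q # qs)) i = (1 - q) * ext (poibin qs) i + q * ext (poibin qs) (i - 1)"
      unfolding ext_def pmf_poibin_Cons[OF q] by (auto simp: nat_diff_distrib)
  qed
  then show ?case using LC_step[OF IH] q by simp
qed

lemma LC_nat:
  assumes "set qs \<subseteq> {0..1}" "a \<le> b"
  shows "pmf (poibin qs) a * pmf (poibin qs) (b + s) \<le> pmf (poibin qs) (a + s) * pmf (poibin qs) b"
proof -
  have "ext (poibin qs) (int a) * ext (poibin qs) (int b + int s) \<le> ext (poibin qs) (int a + int s) * ext (poibin qs) (int b)"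
    using LC_poibin[OF assms(1)] assms(2) unfolding LC_def by simp
  then show ?thesis unfolding ext_def by (simp add: nat_add_distrib)
qed

lemma sum_bound:
  fixes p :: "nat pmf"
  assumes "finite A" "inj_on h A" "\<And>i. i \<in> A \<Longrightarrow> pm * pmf p i \<le> pk * pmf p (h i)" "0 \<le> pk"
  shows "pm * measure p A \<le> pk"
proof -
  have "pm * measure p A = (\<Sum>i\<in>A. pm * pmf p i)"
    using assms(1) by (simp add: measure_measure_pmf_finite sum_distrib_left)
  also have "\<dots> \<le> (\<Sum>i\<in>A. pk * pmf p (h i))" using assms(3) by (rule sum_mono)
  also have "\<dots> = pk * (\<Sum>j\<in>h ` A. pmf p j)"
    using assms(2) by (simp add: sum.reindex sum_distrib_left)
  also have "\<dots> = pk * measure p (h ` A)" using assms(1) by (simp add: measure_measure_pmf_finite)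
  also have "\<dots> \<le> pk * 1" using assms(4) by (intro mult_left_mono) auto
  finally show ?thesis by simp
qed

lemma sum_split3: "sum (f::nat\<Rightarrow>real) {..<n + (m::nat)} = sum f {..<n} + sum (\<lambda>i. f (n + i)) {..<m}"
  by (induction m) (simp_all add: add.assoc)

theorem lemma2:
  fixes c :: real and p :: "nat pmf" and k :: nat
  assumes c_range: "0 < c" "c < 1"
    and c_prop: "\<And>q. is_poibin q \<Longrightarrow> pmf q (pmf_mode q) \<ge> c / sqrt (real (pmf_mode q) + 1)"
    and p_pb: "is_poibin p"
    and k_ge: "k \<ge> 1"
    and small: "pmf p k < c / (12 * sqrt (3 * (real k + 1)))"
  shows "(pmf_mode p < k \<longrightarrow> measure_pmf.prob p {k<..} \<le> 1/2 - c/12)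
       \<and> (pmf_mode p > k \<longrightarrow> measure_pmf.prob p {..<k} \<le> 1/2 - c/12)"
proof -
  obtain qs where qs: "set qs \<subseteq> {0..1}" and pq: "p = poibin qs"
    using p_pb unfolding is_poibin_def by blast
  have P: "\<And>a b s. a \<le> b \<Longrightarrow> pmf p a * pmf p (b + s) \<le> pmf p (a + s) * pmf p b"
    using LC_nat[OF qs] pq by simp
  have fin: "finite (set_pmf p)" using set_poibin[of qs] pq finite_subset by blast
  define M where "M = Max (pmf p ` set_pmf p)"
  have "M \<in> pmf p ` set_pmf p" unfolding M_def using fin set_pmf_not_empty by (intro Max_in) auto
  then obtain x where x: "pmf p x = M" by auto
  have "\<forall>j. pmf p j \<le> pmf p x"
  proof
    fix j show "pmf p j \<le> pmf p x"
    proof (cases "j \<in> set_pmf p")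
      case True then show ?thesis unfolding x M_def using fin by (intro Max_ge) auto
    next
      case False then have "pmf p j = 0" by (simp add: set_pmf_eq)
      then show ?thesis by simp
    qed
  qed
  then have hm: "\<forall>j. pmf p j \<le> pmf p (pmf_mode p)" unfolding pmf_mode_def by (rule LeastI)
  define m where "m = pmf_mode p"
  have hm': "\<And>j. pmf p j \<le> pmf p m" using hm m_def by simp
  have pm: "pmf p m \<ge> c / sqrt (real m + 1)" using c_prop[OF p_pb] m_def by simp
  have sq: "sqrt (real m + 1) > 0" by simp
  have pmpos: "pmf p m > 0" using pm c_range sq by (smt (verit) divide_pos_pos)
  have half: "1/12 \<le> 1/2 - c/12" using c_range by simp
  have c1: "measure_pmf.prob p {k<..} \<le> 1/2 - c/12" if mk: "m < k"
  proof -
    define L where "L = k - m"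
    define A where "A = {k<..} \<inter> set_pmf p"
    have "pmf p m * measure p A \<le> pmf p k"
    proof (rule sum_bound[where h = "\<lambda>i. i - L"])
      show "finite A" unfolding A_def using fin by simp
      show "inj_on (\<lambda>i. i - L) A" unfolding A_def L_def inj_on_def by auto
      show "0 \<le> pmf p k" by simp
      fix i assume "i \<in> A"
      then have i: "i > k" unfolding A_def by simp
      have "pmf p m * pmf p (i - L + L) \<le> pmf p (m + L) * pmf p (i - L)"
        using P[of m "i - L" L] i mk L_def by simp
      then show "pmf p m * pmf p i \<le> pmf p k * pmf p (i - L)"
        using i mk L_def by simp
    qed
    moreover have "measure p A = measure p {k<..}" unfolding A_def by (rule measure_Int_set_pmf)
    ultimately have "pmf p m * measure p {k<..} \<le> pmf p k" by simp
    moreover have "c / (12 * sqrt (3 * (real k + 1))) \<le> c / (12 * sqrt (real m + 1))"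
      using c_range mk by (intro divide_left_mono mult_left_mono) auto
    moreover have "c / (12 * sqrt (real m + 1)) = (c / sqrt (real m + 1)) / 12" by simp
    ultimately have "pmf p m * measure p {k<..} < pmf p m / 12" using small pm by linarith
    then have "measure p {k<..} < 1/12" using pmpos by simp
    then show ?thesis using half by linarith
  qed
  have c2: "measure_pmf.prob p {..<k} \<le> 1/2 - c/12" if mk: "k < m" and m3: "m \<le> 3 * k + 2"
  proof -
    define L where "L = m - k"
    have "pmf p m * measure p {..<k} \<le> pmf p k"
    proof (rule sum_bound[where h = "\<lambda>i. i + L"])
      show "finite {..<k}" by simp
      show "inj_on (\<lambda>i. i + L) {..<k}" unfolding inj_on_def by auto
      show "0 \<le> pmf p k" by simp
      fix i assume "i \<in> {..<k}"
      then have i: "i < k" by simp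
      have "pmf p i * pmf p (k + L) \<le> pmf p (i + L) * pmf p k"
        using P[of i k L] i by simp
      then show "pmf p m * pmf p i \<le> pmf p k * pmf p (i + L)"
        using mk L_def by (simp add: mult.commute)
    qed
    moreover have "c / (12 * sqrt (3 * (real k + 1))) \<le> c / (12 * sqrt (real m + 1))"
      using c_range m3 by (intro divide_left_mono mult_left_mono) auto
    moreover have "c / (12 * sqrt (real m + 1)) = (c / sqrt (real m + 1)) / 12" by simp
    ultimately have "pmf p m * measure p {..<k} < pmf p m / 12" using small pm by linarith
    then have "measure p {..<k} < 1/12" using pmpos by simp
    then show ?thesis using half by linarith
  qed
  have c3: "measure_pmf.prob p {..<k} \<le> 1/2 - c/12" if m3: "m \<ge> 3 * k + 3"
  proof -
    have step: "pmf p i \<le> pmf p (Suc i)" if im: "i < m" for i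
    proof (rule ccontr)
      assume "\<not> ?thesis"
      then have lt: "pmf p (Suc i) < pmf p i" by simp
      then have pi: "pmf p i > 0" using pmf_nonneg[of p "Suc i"] by linarith
      have "pmf p j \<le> pmf p (Suc i)" if "Suc i \<le> j" for j
        using that
      proof (induction j rule: dec_induct)
        case base then show ?case by simp
        case (step j)
        have "pmf p i * pmf p (j + 1) \<le> pmf p (i + 1) * pmf p j"
          using P[of i j 1] step by simp
        also have "\<dots> \<le> pmf p (Suc i) * pmf p (Suc i)"
          using step by (simp add: mult_left_mono)
        also have "\<dots> \<le> pmf p i * pmf p (Suc i)"
          using lt by (intro mult_right_mono) auto
        finally show ?case using pi by simp
      qed
      then have "pmf p m \<le> pmf p (Suc i)" using im by simp
      then show False using lt hm'[of i] by linarith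
    qed
    have mono: "pmf p i \<le> pmf p (i + d)" if "i + d \<le> m" for i d
      using that
    proof (induction d)
      case 0 then show ?case by simp
    next
      case (Suc d)
      then have "pmf p i \<le> pmf p (i + d)" by simp
      also have "\<dots> \<le> pmf p (Suc (i + d))" using Suc.prems by (intro step) simp
      finally show ?case by simp
    qed
    let ?f = "pmf p"
    have s1: "sum ?f {..<k} \<le> sum (\<lambda>i. ?f (k + i)) {..<k}"
      using m3 by (intro sum_mono) (simp add: mono add.commute)
    have s2: "sum ?f {..<k} \<le> sum (\<lambda>i. ?f (k + k + i)) {..<k}"
    proof (rule sum_mono)
      fix i assume "i \<in> {..<k}"
      then show "?f i \<le> ?f (k + k + i)" using mono[of i "k + k"] m3 by (simp add: add.commute)
    qed
    have "sum ?f {..<k + k + k} = sum ?f {..<k} + sum (\<lambda>i. ?f (k + i)) {..<k} + sum (\<lambda>i. ?f (k + k + i)) {..<k}"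
      by (simp add: sum_split3)
    moreover have "sum ?f {..<k + k + k} = measure p {..<k + k + k}" by (simp add: measure_measure_pmf_finite)
    moreover have "measure p {..<k + k + k} \<le> 1" by simp
    ultimately have "3 * sum ?f {..<k} \<le> 1" using s1 s2 by linarith
    moreover have "sum ?f {..<k} = measure p {..<k}" by (simp add: measure_measure_pmf_finite)
    ultimately show ?thesis using c_range by linarith
  qed
  show ?thesis
  proof (intro conjI impI)
    assume "pmf_mode p < k" then show "measure_pmf.prob p {k<..} \<le> 1/2 - c/12" using c1 m_def by simp
  next
    assume a: "pmf_mode p > k"
    show "measure_pmf.prob p {..<k} \<le> 1/2 - c/12"
    proof (cases "m \<le> 3 * k + 2")
      case True then show ?thesis using c2 a m_def by simp
    next
      case False then show ?thesis using c3 by simp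
    qed
  qed
qed

end
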